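(* With the notation of the context, the solution $x:[0,1]\to\mathbb{R}^{n_x}$ of the linear ODE $$\frac{dx}{d\lambda}=A(\lambda)x(\lambda)+b(\lambda),\qquad x(0)=x_0,$$ satisfies $x(1)=\Phi(1,0)x_0+E\,c$, where $\Phi(1,0)=I+E\,\Omega F^\top$ with $\Omega=\mathrm{diag}(\omega_i)$, $\omega_i=\big((1+\alpha_i)^{-1/2}-1\big)/\alpha_i$, and $c\in\mathbb{R}^{n_z}$ has entries $$c_i=\frac{\alpha_i\tilde z_i+\tilde x_i\big(1-\sqrt{1+\alpha_i}\big)}{\alpha_i(1+\alpha_i)}.$$ Moreover $b(\mu)=E\beta(\mu)$ with $\beta_i(\mu)=\dfrac{\tilde z_i(1+\tfrac12\mu\alpha_i)-\tfrac12\tilde x_i}{(1+\mu\alpha_i)^2}$.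
   Context: $P\in\mathbb{R}^{n_x\times n_x}$, $R\in\mathbb{R}^{n_z\times n_z}$ symmetric positive definite, $H\in\mathbb{R}^{n_z\times n_x}$ of full row rank, $\bar x\in\mathbb{R}^{n_x}$ (prior mean), $z\in\mathbb{R}^{n_z}$ (observation). $R^{-1/2}$ is the inverse of the symmetric positive definite square root of $R$. The EDH flow is defined by $A(\lambda)=-\tfrac12 PH^\top(\lambda HPH^\top+R)^{-1}H$ and $b(\lambda)=(I+2\lambda A(\lambda))\big[(I+\lambda A(\lambda))PH^\top R^{-1}z+A(\lambda)\bar x\big]$. Let $D=R^{-1/2}HPH^\top R^{-1/2}=V\Lambda V^\top$ with $V$ orthogonal and $\Lambda=\mathrm{diag}(\alpha_1,\dots,\alpha_{n_z})$, $\alpha_i>0$. Define $E=PH^\top R^{-1/2}V$, $F^\top=V^\top R^{-1/2}H$, $\tilde z=V^\top R^{-1/2}z$, $\tilde x=F^\top\bar x$. *)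

theory Defs
  imports "HOL-Analysis.Analysis"
begin

definition spd :: "real^'n^'n \<Rightarrow> bool" where
  "spd M \<longleftrightarrow> transpose M = M \<and> (\<forall>v. v \<noteq> 0 \<longrightarrow> 0 < v \<bullet> (M *v v))"

definition spd_sqrt :: "real^'n^'n \<Rightarrow> real^'n^'n" where
  "spd_sqrt M = (THE S. spd S \<and> S ** S = M)"

definition inv_sqrt :: "real^'n^'n \<Rightarrow> real^'n^'n" where
  "inv_sqrt M = matrix_inv (spd_sqrt M)"

definition diag_mat :: "real^'n \<Rightarrow> real^'n^'n" where
  "diag_mat a = (\<chi> i j. if i = j then a $ i else 0)"

definition EDH_A :: "real^'nx^'nx \<Rightarrow> real^'nz^'nz \<Rightarrow> real^'nx^'nz \<Rightarrow> real \<Rightarrow> real^'nx^'nx" where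
  "EDH_A P R H l = (- (1/2)) *\<^sub>R (P ** transpose H ** matrix_inv (l *\<^sub>R (H ** P ** transpose H) + R) ** H)"

definition EDH_b :: "real^'nx^'nx \<Rightarrow> real^'nz^'nz \<Rightarrow> real^'nx^'nz \<Rightarrow> real^'nx \<Rightarrow> real^'nz \<Rightarrow> real \<Rightarrow> real^'nx" where
  "EDH_b P R H xbar z l =
     (mat 1 + (2 * l) *\<^sub>R EDH_A P R H l) *v
       ((mat 1 + l *\<^sub>R EDH_A P R H l) ** P ** transpose H ** matrix_inv R *v z
        + EDH_A P R H l *v xbar)"

end

theory Submission
  imports Defs
begin


lemma inner_sym_matrix:
  fixes A :: "real^'n^'n"
  assumes "transpose A = A"
  shows "x \<bullet> (A *v y) = (A *v x) \<bullet> y"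
proof -
  have "x \<bullet> (A *v y) = (x v* A) \<bullet> y" by (simp add: dot_lmul_matrix)
  also have "x v* A = transpose A *v x" by simp
  finally show ?thesis using assms by simp
qed

lemma eigen_max:
  fixes A :: "real^'n^'n"
  assumes sym: "transpose A = A" and W: "subspace W" and nz: "W \<noteq> {0}"
    and inv: "\<forall>v\<in>W. A *v v \<in> W"
  shows "\<exists>u\<in>W. norm u = 1 \<and> A *v u = (u \<bullet> (A *v u)) *\<^sub>R u"
proof -
  define K where "K = W \<inter> sphere 0 1"
  have "closed W" using W closed_subspace by blast
  then have cK: "compact K" unfolding K_def by (simp add: closed_Int_compact)
  obtain w where w: "w \<in> W" "w \<noteq> 0" using nz W subspace_0 by blast
  have "w /\<^sub>R norm w \<in> K" using w W unfolding K_def by (simp add: subspace_scale)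
  then have neK: "K \<noteq> {}" by blast
  have cont: "continuous_on K (\<lambda>v. v \<bullet> (A *v v))"
    by (intro continuous_intros linear_continuous_on) (auto intro: linear_linear)
  obtain u where u: "u \<in> K" and umax: "\<And>y. y \<in> K \<Longrightarrow> y \<bullet> (A *v y) \<le> u \<bullet> (A *v u)"
    using continuous_attains_sup[OF cK neK cont] by blast
  define \<mu> where "\<mu> = u \<bullet> (A *v u)"
  have uW: "u \<in> W" and nu: "norm u = 1" using u unfolding K_def by auto
  have uu: "u \<bullet> u = 1" using nu by (simp add: norm_eq_1)
  have bound: "v \<bullet> (A *v v) \<le> \<mu> * (v \<bullet> v)" if "v \<in> W" for v
  proof (cases "v = 0")
    case True then show ?thesis by simp
  next
    case False
    let ?y = "v /\<^sub>R norm v"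
    have "?y \<in> K" using that False W unfolding K_def by (simp add: subspace_scale)
    then have "?y \<bullet> (A *v ?y) \<le> \<mu>" using umax \<mu>_def by blast
    moreover have "?y \<bullet> (A *v ?y) = (v \<bullet> (A *v v)) / (norm v)^2"
      by (simp add: matrix_vector_mult_scaleR power2_eq_square field_simps)
    moreover have "(norm v)^2 = v \<bullet> v" by (simp add: power2_norm_eq_inner)
    moreover have "norm v > 0" using False by simp
    ultimately show ?thesis by (simp add: divide_le_eq mult.commute)
  qed
  define w where "w = A *v u - \<mu> *\<^sub>R u"
  have wW: "w \<in> W" unfolding w_def using inv uW W by (simp add: subspace_diff subspace_scale)
  have wu: "w \<bullet> u = 0" unfolding w_def using uu by (simp add: \<mu>_def inner_diff_left inner_diff_right inner_commute)
  define c where "c = w \<bullet> w"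
  define d where "d = w \<bullet> (A *v w) - \<mu> * c"
  have wAu: "w \<bullet> (A *v u) = c"
  proof -
    have "A *v u = w + \<mu> *\<^sub>R u" unfolding w_def by simp
    then show ?thesis using wu by (simp add: c_def inner_add_right inner_commute)
  qed
  have uAw: "u \<bullet> (A *v w) = c" using wAu inner_sym_matrix[OF sym, of u w] by (simp add: inner_commute)
  have key: "2 * t * c + t^2 * d \<le> 0" for t
  proof -
    have "u + t *\<^sub>R w \<in> W" using uW wW W by (simp add: subspace_add subspace_scale)
    from bound[OF this] have "(u + t *\<^sub>R w) \<bullet> (A *v (u + t *\<^sub>R w)) \<le> \<mu> * ((u + t *\<^sub>R w) \<bullet> (u + t *\<^sub>R w))" .
    moreover have "(u + t *\<^sub>R w) \<bullet> (A *v (u + t *\<^sub>R w)) = \<mu> + 2 * t * c + t^2 * (w \<bullet> (A *v w))"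
      by (simp add: matrix_vector_right_distrib matrix_vector_mult_scaleR inner_add_left inner_add_right
          \<mu>_def wAu uAw power2_eq_square algebra_simps)
    moreover have "(u + t *\<^sub>R w) \<bullet> (u + t *\<^sub>R w) = 1 + t^2 * c"
      using wu by (simp add: inner_add_left inner_add_right uu inner_commute c_def power2_eq_square)
    ultimately have "\<mu> + 2 * t * c + t^2 * (w \<bullet> (A *v w)) \<le> \<mu> * (1 + t^2 * c)" by (metis (no_types, lifting))
    then show ?thesis by (simp add: d_def algebra_simps)
  qed
  have c0: "c \<ge> 0" unfolding c_def by simp
  have "c = 0"
  proof (rule ccontr)
    assume "c \<noteq> 0"
    then have cp: "c > 0" using c0 by simp
    define t where "t = c / (\<bar>d\<bar> + 1)"
    have "2 * t * c + t^2 * d \<le> 0" by (rule key)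
    then have "(2 * t * c + t^2 * d) * (\<bar>d\<bar> + 1)^2 \<le> 0"
      by (simp add: mult_nonpos_nonneg)
    moreover have "(2 * t * c + t^2 * d) * (\<bar>d\<bar> + 1)^2 = c^2 * (2 * \<bar>d\<bar> + 2 + d)"
    proof -
      have e: "\<bar>d\<bar> + 1 \<noteq> 0" using abs_ge_zero[of d] by linarith
      have te: "t * (\<bar>d\<bar> + 1) = c" unfolding t_def using e by simp
      have "(2 * t * c + t^2 * d) * (\<bar>d\<bar> + 1)^2 = 2 * c * (t * (\<bar>d\<bar> + 1)) * (\<bar>d\<bar> + 1) + d * (t * (\<bar>d\<bar> + 1))^2"
        by (simp add: power2_eq_square algebra_simps)
      also have "\<dots> = c^2 * (2 * \<bar>d\<bar> + 2 + d)" unfolding te by (simp add: power2_eq_square algebra_simps)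
      finally show ?thesis .
    qed
    moreover have "c^2 * (2 * \<bar>d\<bar> + 2 + d) > 0" using cp by (intro mult_pos_pos) auto
    ultimately show False by linarith
  qed
  then have "w = 0" unfolding c_def by simp
  then show ?thesis using uW nu by (intro bexI[of _ u]) (auto simp: w_def \<mu>_def)
qed

lemma spectral_subspace:
  fixes A :: "real^'n^'n"
  assumes sym: "transpose A = A"
  shows "subspace W \<Longrightarrow> (\<forall>v\<in>W. A *v v \<in> W) \<Longrightarrow>
    \<exists>B. finite B \<and> B \<subseteq> W \<and> pairwise orthogonal B \<and>
        (\<forall>b\<in>B. norm b = 1 \<and> A *v b = (b \<bullet> (A *v b)) *\<^sub>R b) \<and> span B = W"
proof (induction "dim W" arbitrary: W rule: less_induct)
  case less
  show ?case
  proof (cases "W = {0}")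
    case True
    then show ?thesis by (intro exI[of _ "{}"]) auto
  next
    case False
    obtain u where uW: "u \<in> W" and nu: "norm u = 1" and eu: "A *v u = (u \<bullet> (A *v u)) *\<^sub>R u"
      using eigen_max[OF sym less.prems(1) False less.prems(2)] by blast
    have uu: "u \<bullet> u = 1" using nu by (simp add: norm_eq_1)
    define W' where "W' = {v\<in>W. u \<bullet> v = 0}"
    have sW': "subspace W'" using less.prems(1) unfolding W'_def subspace_def
      by (auto simp: inner_add_right)
    have iW': "\<forall>v\<in>W'. A *v v \<in> W'"
    proof
      fix v assume v: "v \<in> W'"
      have "u \<bullet> (A *v v) = (A *v u) \<bullet> v" by (rule inner_sym_matrix[OF sym])
      also have "\<dots> = 0" using v unfolding W'_def by (subst eu) simp
      finally show "A *v v \<in> W'" using v less.prems(2) unfolding W'_def by auto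
    qed
    have "W' \<subset> W" using uW uu unfolding W'_def by (auto, metis (mono_tags, lifting) mem_Collect_eq zero_neq_one)
    then have "span W' \<subset> span W" using sW' less.prems(1) by (metis span_eq_iff)
    then have "dim W' < dim W" by (rule dim_psubset)
    from less.hyps[OF this sW' iW'] obtain B' where B': "finite B'" "B' \<subseteq> W'" "pairwise orthogonal B'"
      "\<forall>b\<in>B'. norm b = 1 \<and> A *v b = (b \<bullet> (A *v b)) *\<^sub>R b" "span B' = W'" by blast
    have uB': "u \<notin> B'" using B'(2) uu unfolding W'_def by auto
    have ortho: "orthogonal u b" "orthogonal b u" if "b \<in> B'" for b
      using that B'(2) unfolding W'_def orthogonal_def by (auto simp: inner_commute)
    show ?thesis
    proof (intro exI[of _ "insert u B'"] conjI)
      show "finite (insert u B')" using B' by simp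
      show "insert u B' \<subseteq> W" using B'(2) uW unfolding W'_def by auto
      show "pairwise orthogonal (insert u B')" using B'(3) ortho
        by (auto simp: pairwise_insert)
      show "\<forall>b\<in>insert u B'. norm b = 1 \<and> A *v b = (b \<bullet> (A *v b)) *\<^sub>R b"
        using B'(4) nu eu by auto
      show "span (insert u B') = W"
      proof
        show "span (insert u B') \<subseteq> W"
          using \<open>insert u B' \<subseteq> W\<close> less.prems(1) by (simp add: span_minimal)
        show "W \<subseteq> span (insert u B')"
        proof
          fix v assume v: "v \<in> W"
          have "v - (u \<bullet> v) *\<^sub>R u \<in> W'" using v uW uu less.prems(1) unfolding W'_def
            by (auto simp: subspace_diff subspace_scale inner_diff_right)
          then have "v - (u \<bullet> v) *\<^sub>R u \<in> span (insert u B')"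
            using B'(5) span_mono[of B' "insert u B'"] by auto
          moreover have "(u \<bullet> v) *\<^sub>R u \<in> span (insert u B')"
            by (simp add: span_base span_scale)
          ultimately have "(v - (u \<bullet> v) *\<^sub>R u) + (u \<bullet> v) *\<^sub>R u \<in> span (insert u B')"
            by (rule span_add)
          then show "v \<in> span (insert u B')" by simp
        qed
      qed
    qed
  qed
qed

lemma spectral:
  fixes A :: "real^'n^'n"
  assumes sym: "transpose A = A"
  obtains B where "finite B" "pairwise orthogonal B"
     "\<And>b. b \<in> B \<Longrightarrow> norm b = 1" "\<And>b. b \<in> B \<Longrightarrow> A *v b = (b \<bullet> (A *v b)) *\<^sub>R b"
     "\<And>v. v = (\<Sum>b\<in>B. (v \<bullet> b) *\<^sub>R b)"
     "\<And>b b'. b \<in> B \<Longrightarrow> b' \<in> B \<Longrightarrow> b \<bullet> b' = (if b = b' then 1 else 0)"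
proof -
  obtain B where B: "finite B" "pairwise orthogonal B"
        "\<forall>b\<in>B. norm b = 1 \<and> A *v b = (b \<bullet> (A *v b)) *\<^sub>R b" "span B = UNIV"
    using spectral_subspace[OF sym, of UNIV] by auto
  have ex: "v = (\<Sum>b\<in>B. (v \<bullet> b) *\<^sub>R b)" for v
    using orthonormal_basis_expand[OF B(2) _ _ B(1), of v] B(3,4) by auto
  have on: "b \<bullet> b' = (if b = b' then 1 else 0)" if "b \<in> B" "b' \<in> B" for b b'
  proof (cases "b = b'")
    case True then show ?thesis using B(3) that by (simp add: norm_eq_1)
  next
    case False then show ?thesis using B(2) that unfolding pairwise_def orthogonal_def by auto
  qed
  show ?thesis using that B ex on by blast
qed



lemma matrix_vector_sum:
  fixes A :: "real^'n^'m"
  assumes "finite B"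
  shows "A *v (\<Sum>b\<in>B. f b) = (\<Sum>b\<in>B. A *v f b)"
  using assms by (induct rule: finite_induct) (simp_all add: matrix_vector_right_distrib)

lemma inner_onb_sum:
  assumes "finite B" "b' \<in> B"
    and on: "\<And>b b'. b \<in> B \<Longrightarrow> b' \<in> B \<Longrightarrow> b \<bullet> b' = (if b = b' then 1 else 0)"
  shows "b' \<bullet> (\<Sum>b\<in>B. f b *\<^sub>R b) = f b'"
proof -
  have "b' \<bullet> (\<Sum>b\<in>B. f b *\<^sub>R b) = (\<Sum>b\<in>B. f b * (b' \<bullet> b))"
    by (simp add: inner_sum_right)
  also have "\<dots> = (\<Sum>b\<in>B. if b = b' then f b else 0)"
    using on assms(2) by (intro sum.cong) auto
  also have "\<dots> = f b'" using assms by (simp add: sum.delta')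
  finally show ?thesis .
qed

lemma spd_sqrt_exists:
  fixes R :: "real^'n^'n"
  assumes R: "spd R"
  shows "\<exists>S. spd S \<and> S ** S = R"
proof -
  have sym: "transpose R = R" using R unfolding spd_def by simp
  obtain B where B: "finite B" "pairwise orthogonal B"
     "\<And>b. b \<in> B \<Longrightarrow> norm b = 1" "\<And>b. b \<in> B \<Longrightarrow> R *v b = (b \<bullet> (R *v b)) *\<^sub>R b"
     "\<And>v. v = (\<Sum>b\<in>B. (v \<bullet> b) *\<^sub>R b)"
     "\<And>b b'. b \<in> B \<Longrightarrow> b' \<in> B \<Longrightarrow> b \<bullet> b' = (if b = b' then 1 else 0)"
    using spectral[OF sym] by (rule meta_mp) (rule that)
  define lam where "lam b = b \<bullet> (R *v b)" for b
  have lpos: "lam b > 0" if "b \<in> B" for b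
  proof -
    have "b \<noteq> 0" using B(3)[OF that] by auto
    then show ?thesis using R unfolding spd_def lam_def by auto
  qed
  define S :: "real^'n^'n" where "S = (\<chi> i j. \<Sum>b\<in>B. sqrt (lam b) * b$i * b$j)"
  have Sv: "S *v v = (\<Sum>b\<in>B. (sqrt (lam b) * (b \<bullet> v)) *\<^sub>R b)" for v
    unfolding S_def
    by (simp add: vec_eq_iff matrix_vector_mult_def inner_vec_def sum_distrib_left sum_distrib_right
        sum.swap[of _ B UNIV] mult_ac)
  have bSv: "b \<bullet> (S *v v) = sqrt (lam b) * (b \<bullet> v)" if "b \<in> B" for b v
    unfolding Sv using inner_onb_sum[OF B(1) that B(6)] by simp
  have symS: "transpose S = S"
    unfolding S_def by (simp add: vec_eq_iff transpose_def mult_ac)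
  have pd: "0 < v \<bullet> (S *v v)" if "v \<noteq> 0" for v
  proof -
    have eq: "v \<bullet> (S *v v) = (\<Sum>b\<in>B. sqrt (lam b) * (b \<bullet> v)^2)"
      unfolding Sv by (simp add: inner_sum_right inner_commute power2_eq_square mult_ac)
    have nn: "\<forall>b\<in>B. 0 \<le> sqrt (lam b) * (b \<bullet> v)^2"
      using lpos by (metis less_imp_le mult_nonneg_nonneg real_sqrt_ge_zero zero_le_power2)
    have "(\<Sum>b\<in>B. sqrt (lam b) * (b \<bullet> v)^2) \<noteq> 0"
    proof
      assume "(\<Sum>b\<in>B. sqrt (lam b) * (b \<bullet> v)^2) = 0"
      then have z: "\<forall>b\<in>B. sqrt (lam b) * (b \<bullet> v)^2 = 0"
        using sum_nonneg_eq_0_iff[OF B(1), of "\<lambda>b. sqrt (lam b) * (b \<bullet> v)^2"] nn by simp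
      have "v \<bullet> b = 0" if "b \<in> B" for b
      proof -
        have "sqrt (lam b) \<noteq> 0" using lpos[OF that] by simp
        moreover have "sqrt (lam b) * (b \<bullet> v)^2 = 0" using z that by blast
        ultimately have "(b \<bullet> v)^2 = 0" by simp
        then show ?thesis by (simp add: inner_commute)
      qed
      then have "(\<Sum>b\<in>B. (v \<bullet> b) *\<^sub>R b) = 0" by simp
      with B(5)[of v] have "v = 0" by (rule trans)
      then show False using that by simp
    qed
    moreover have "(\<Sum>b\<in>B. sqrt (lam b) * (b \<bullet> v)^2) \<ge> 0" using nn by (simp add: sum_nonneg)
    ultimately show ?thesis using eq by linarith
  qed
  have Rb: "R *v b = lam b *\<^sub>R b" if "b \<in> B" for b
    unfolding lam_def by (rule B(4)[OF that])
  have SS: "S ** S = R"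
  proof -
    have "(S ** S) *v v = R *v v" for v
    proof -
      have "(S ** S) *v v = S *v (S *v v)" by (simp add: matrix_vector_mul_assoc)
      also have "\<dots> = (\<Sum>b\<in>B. (lam b * (v \<bullet> b)) *\<^sub>R b)"
        unfolding Sv[of "S *v v"] using lpos
        by (intro sum.cong) (auto simp: bSv inner_commute real_sqrt_mult[symmetric] less_imp_le)
      also have "\<dots> = R *v v"
        apply (subst (2) B(5)[of v])
        using Rb by (simp add: matrix_vector_sum[OF B(1)] matrix_vector_mult_scaleR mult.commute)
      finally show ?thesis .
    qed
    then show ?thesis by (simp add: matrix_eq)
  qed
  show ?thesis using symS pd SS unfolding spd_def by blast
qed

lemma spd_sqrt_unique:
  fixes S1 S2 :: "real^'n^'n"
  assumes S1: "spd S1" and S2: "spd S2" and eq: "S1 ** S1 = S2 ** S2"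
  shows "S1 = S2"
proof -
  define T where "T = S1 - S2"
  have "transpose (S1 - S2) = transpose S1 - transpose S2"
    by (simp add: vec_eq_iff transpose_def)
  then have symT: "transpose T = T" using S1 S2 unfolding spd_def T_def by simp
  have sym2: "transpose S2 = S2" using S2 unfolding spd_def by simp
  obtain B where B: "finite B" "pairwise orthogonal B"
     "\<And>b. b \<in> B \<Longrightarrow> norm b = 1" "\<And>b. b \<in> B \<Longrightarrow> T *v b = (b \<bullet> (T *v b)) *\<^sub>R b"
     "\<And>v. v = (\<Sum>b\<in>B. (v \<bullet> b) *\<^sub>R b)"
     "\<And>b b'. b \<in> B \<Longrightarrow> b' \<in> B \<Longrightarrow> b \<bullet> b' = (if b = b' then 1 else 0)"
    using spectral[OF symT] by (rule meta_mp) (rule that)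
  have Tx: "T *v x = S1 *v x - S2 *v x" for x unfolding T_def by (simp add: matrix_vector_mult_diff_rdistrib)
  have Tb0: "T *v b = 0" if b: "b \<in> B" for b
  proof -
    define \<mu> where "\<mu> = b \<bullet> (T *v b)"
    have Tb: "T *v b = \<mu> *\<^sub>R b" unfolding \<mu>_def by (rule B(4)[OF b])
    have "S1 *v (T *v b) + T *v (S2 *v b) = (S1 ** S1) *v b - (S2 ** S2) *v b"
      unfolding Tx by (simp add: matrix_vector_mult_diff_distrib matrix_vector_mul_assoc)
    then have z: "S1 *v (T *v b) + T *v (S2 *v b) = 0" using eq by simp
    have "b \<bullet> (T *v (S2 *v b)) = (T *v b) \<bullet> (S2 *v b)" by (rule inner_sym_matrix[OF symT])
    then have "b \<bullet> (S1 *v (T *v b)) + (T *v b) \<bullet> (S2 *v b) = 0"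
      using arg_cong[OF z, of "\<lambda>y. b \<bullet> y"] by (simp add: inner_add_right)
    then have "\<mu> * (b \<bullet> (S1 *v b) + b \<bullet> (S2 *v b)) = 0"
      by (simp add: Tb matrix_vector_mult_scaleR algebra_simps)
    moreover have "b \<noteq> 0" using B(3)[OF b] by auto
    then have "b \<bullet> (S1 *v b) + b \<bullet> (S2 *v b) > 0" using S1 S2 unfolding spd_def
      by (simp add: add_pos_pos)
    ultimately have "\<mu> = 0" by simp
    then show ?thesis using Tb by simp
  qed
  have "T *v v = 0" for v
    apply (subst B(5)[of v])
    by (simp add: matrix_vector_sum[OF B(1)] matrix_vector_mult_scaleR Tb0)
  then have "S1 *v v = S2 *v v" for v using Tx by simp
  then show ?thesis by (simp add: matrix_eq)
qed

lemma spd_sqrt_props: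
  fixes R :: "real^'n^'n"
  assumes "spd R"
  shows "spd (spd_sqrt R) \<and> spd_sqrt R ** spd_sqrt R = R"
proof -
  obtain S where S: "spd S" "S ** S = R" using spd_sqrt_exists[OF assms] by blast
  have "(THE S. spd S \<and> S ** S = R) = S"
    using S spd_sqrt_unique by (intro the_equality) auto
  then show ?thesis using S unfolding spd_sqrt_def by simp
qed



lemma diag_mv: "diag_mat a *v x = (\<chi> i. a$i * x$i)"
  by (simp add: diag_mat_def matrix_vector_mult_def vec_eq_iff if_distrib if_distribR cong: if_cong)

lemma scaleR_mv: "((c::real) *\<^sub>R (A::real^'n^'m)) *v x = c *\<^sub>R (A *v x)"
  by (rule scaleR_matrix_vector_assoc[symmetric])

lemma mat1_mv: "mat 1 *v x = x" by simp

lemma inv_eq: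
  fixes A B :: "real^'n^'n"
  assumes "A ** B = mat 1"
  shows "matrix_inv A = B"
proof -
  have BA: "B ** A = mat 1" using assms matrix_left_right_inverse by blast
  have "\<exists>A'. A ** A' = mat 1 \<and> A' ** A = mat 1" using assms BA by blast
  then have C: "A ** matrix_inv A = mat 1 \<and> matrix_inv A ** A = mat 1"
    unfolding matrix_inv_def by (rule someI_ex)
  have "matrix_inv A = matrix_inv A ** (A ** B)" using assms by simp
  also have "\<dots> = (matrix_inv A ** A) ** B" by (simp add: matrix_mul_assoc)
  also have "\<dots> = B" using C by simp
  finally show ?thesis .
qed

lemma matrix_eq_mv:
  fixes A B :: "real^'n^'m"
  shows "(\<And>x. A *v x = B *v x) \<Longrightarrow> A = B"
  by (simp add: matrix_eq)

lemma inv_sqrt_props: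
  fixes R :: "real^'n^'n"
  assumes R: "spd R"
  shows "\<And>x. spd_sqrt R *v (inv_sqrt R *v x) = x"
    "\<And>x. inv_sqrt R *v (spd_sqrt R *v x) = x"
    "\<And>x. R *v x = spd_sqrt R *v (spd_sqrt R *v x)"
    "\<And>x. matrix_inv R *v x = inv_sqrt R *v (inv_sqrt R *v x)"
proof -
  define S0 where "S0 = spd_sqrt R"
  have S0: "spd S0" "S0 ** S0 = R" using spd_sqrt_props[OF R] unfolding S0_def by auto
  have "\<forall>x. S0 *v x = 0 \<longrightarrow> x = 0"
  proof (intro allI impI)
    fix x assume "S0 *v x = 0"
    then have "x \<bullet> (S0 *v x) = 0" by simp
    then show "x = 0" using S0(1) unfolding spd_def by (metis less_irrefl)
  qed
  then obtain C where "C ** S0 = mat 1" using matrix_left_invertible_ker by blast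
  then have SC: "S0 ** C = mat 1" using matrix_left_right_inverse by blast
  then have CS: "C ** S0 = mat 1" using matrix_left_right_inverse by blast
  have inv: "inv_sqrt R = C" unfolding inv_sqrt_def S0_def[symmetric] using inv_eq[OF SC] .
  show 1: "\<And>x. spd_sqrt R *v (inv_sqrt R *v x) = x" unfolding inv S0_def[symmetric]
    by (simp add: matrix_vector_mul_assoc SC)
  show 2: "\<And>x. inv_sqrt R *v (spd_sqrt R *v x) = x" unfolding inv S0_def[symmetric]
    by (simp add: matrix_vector_mul_assoc CS)
  show 3: "\<And>x. R *v x = spd_sqrt R *v (spd_sqrt R *v x)" unfolding S0_def[symmetric]
    by (simp add: matrix_vector_mul_assoc S0)
  have "R ** (C ** C) = mat 1"
  proof -
    have "R ** (C ** C) = S0 ** (S0 ** C) ** C" using S0(2) by (simp add: matrix_mul_assoc)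
    also have "\<dots> = mat 1" using SC by simp
    finally show ?thesis .
  qed
  then have "matrix_inv R = C ** C" by (rule inv_eq)
  then show "\<And>x. matrix_inv R *v x = inv_sqrt R *v (inv_sqrt R *v x)" unfolding inv
    by (simp add: matrix_vector_mul_assoc)
qed



lemma sc_g:
  fixes d l a Z X :: real
  assumes d: "d \<noteq> 0" and dd: "1 + l*a = d"
  shows "Z + (l * (-(1/2))) * (1/d * (a*Z)) + (-(1/2)) * (1/d * X) = (Z * (1 + l*a/2) - X/2)/d"
proof -
  have la: "l * a = d - 1" using dd by simp
  have "Z + (l * (-(1/2))) * (1/d * (a*Z)) + (-(1/2)) * (1/d * X) = Z - (l*a) * Z / (2*d) - X / (2*d)"
    by (simp add: field_simps)
  also have "\<dots> = Z - (d - 1) * Z / (2*d) - X / (2*d)" by (simp add: la)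
  also have "\<dots> = (Z * (d + 1) - X) / (2 * d)" using d by (simp add: field_simps)
  also have "(Z * (1 + l*a/2) - X/2)/d = (Z * (d + 1) - X) / (2 * d)" using d
    unfolding dd[symmetric] by (simp add: field_simps)
  ultimately show ?thesis by simp
qed
lemma sc_h:
  fixes d l a g :: real
  assumes d: "d \<noteq> 0" and dd: "1 + l*a = d"
  shows "g - l * (1/d * (a * g)) = g / d"
proof -
  have "g - l * (1/d * (a * g)) = (g * d - (l*a) * g) / d" using d by (simp add: field_simps)
  also have "\<dots> = g / d" unfolding dd[symmetric] by (simp add: algebra_simps)
  finally show ?thesis .
qed

lemma sqrt_deriv:
  fixes a l :: real
  assumes "0 < 1 + l * a"
  shows "((\<lambda>l. sqrt (1 + l * a)) has_real_derivative (a / (2 * sqrt (1 + l * a)))) (at l within S)"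
proof -
  have g: "((\<lambda>l. 1 + l * a) has_real_derivative a) (at l within S)"
    by (auto intro!: derivative_eq_intros)
  have "((\<lambda>l. sqrt (1 + l * a)) has_real_derivative (inverse (sqrt (1 + l * a)) / 2) * a) (at l within S)"
    by (rule DERIV_chain2[OF DERIV_real_sqrt[OF assms] g])
  then show ?thesis by (simp add: field_simps)
qed

lemma scalar_deriv:
  fixes a l Z X :: real and W :: "real \<Rightarrow> real"
  assumes pos: "0 < 1 + l * a"
    and dW: "(W has_real_derivative a * (-(1/2) * (1/(1 + l*a) * W l) + (Z * (1 + l*a/2) - X/2) / (1 + l*a)^2)) (at l within S)"
  shows "((\<lambda>l. sqrt (1 + l*a) * W l - Z * sqrt (1 + l*a) + (Z - X) / sqrt (1 + l*a)) has_real_derivative 0) (at l within S)"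
proof -
  define s where "s = sqrt (1 + l*a)"
  have s: "s > 0" "s^2 = 1 + l*a" unfolding s_def using pos by auto
  note ds = sqrt_deriv[OF pos, of S, folded s_def]
  define Dw where "Dw = a * (-(1/2) * (1/(1 + l*a) * W l) + (Z * (1 + l*a/2) - X/2) / (1 + l*a)^2)"
  have 1: "((\<lambda>l. sqrt (1 + l*a) * W l) has_real_derivative ((a / (2 * s)) * W l + Dw * s)) (at l within S)"
    using DERIV_mult'[OF ds dW[folded Dw_def]] unfolding s_def by (simp add: algebra_simps)
  have 2: "((\<lambda>l. Z * sqrt (1 + l*a)) has_real_derivative (Z * (a / (2 * s)))) (at l within S)"
    using DERIV_cmult[OF ds, of Z] .
  have 3: "((\<lambda>l. (Z - X) * inverse (sqrt (1 + l*a))) has_real_derivative ((Z - X) * (- (inverse s * (a / (2 * s)) * inverse s)))) (at l within S)"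
    using DERIV_cmult[OF DERIV_inverse'[OF ds], of "Z - X"] s(1) unfolding s_def by simp
  have 4: "((\<lambda>l. sqrt (1 + l*a) * W l - Z * sqrt (1 + l*a) + (Z - X) * inverse (sqrt (1 + l*a))) has_real_derivative
      (((a / (2 * s)) * W l + Dw * s) - Z * (a / (2 * s)) + (Z - X) * (- (inverse s * (a / (2 * s)) * inverse s)))) (at l within S)"
    by (intro DERIV_add DERIV_diff 1 2 3)
  have e: "((a / (2 * s)) * W l + Dw * s) - Z * (a / (2 * s)) + (Z - X) * (- (inverse s * (a / (2 * s)) * inverse s)) = 0"
  proof -
    have u: "1 + l*a = s^2" using s by simp
    have "Dw = a * (-(1/2) * (1/s^2 * W l) + (Z * (1 + (s^2 - 1)/2) - X/2) / (s^2)^2)"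
      unfolding Dw_def u by (simp add: u[symmetric])
    then show ?thesis using s(1) by (simp add: field_simps power2_eq_square)
  qed
  show ?thesis using 4 unfolding e by (simp add: divide_inverse)
qed

lemma scalar_final:
  fixes a W0 W1 Z X :: real
  assumes a: "a > 0"
    and h: "sqrt (1 + 1*a) * W1 - Z * sqrt (1 + 1*a) + (Z - X) / sqrt (1 + 1*a)
          = sqrt (1 + 0*a) * W0 - Z * sqrt (1 + 0*a) + (Z - X) / sqrt (1 + 0*a)"
  shows "1 / a * (W1 - W0) = (1 / sqrt (1 + a) - 1) / a * W0 + (a * Z + X * (1 - sqrt (1 + a))) / (a * (1 + a))"
proof -
  define s where "s = sqrt (1 + a)"
  have s: "s > 0" "s^2 = 1 + a" unfolding s_def using a by auto
  have aa: "a = s^2 - 1" using s by simp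
  have h': "s * W1 - Z * s + (Z - X) / s = W0 - X" using h unfolding s_def by simp
  have W1: "W1 = (W0 - X + Z * s - (Z - X) / s) / s" using h' s(1) by (simp add: field_simps)
  have A: "W1 - W0 = W0 * (1/s - 1) + (Z - X/s - (Z - X)/s^2)"
    unfolding W1 using s(1) by (simp add: field_simps power2_eq_square)
  have B: "Z - X/s - (Z - X)/s^2 = (a*Z + X*(1 - s))/(1 + a)"
    unfolding s(2)[symmetric] aa using s(1) by (simp add: field_simps power2_eq_square)
  have "1 + a \<noteq> 0" "a \<noteq> 0" "s \<noteq> 0" "a + a * a \<noteq> 0" using a s(1) by (auto, smt (verit) mult_pos_pos)
  have gen: "1/a*(P + T/(1+a)) = P/a + T/(a*(1+a))" for P T by (simp add: ring_distribs divide_divide_eq_left ac_simps)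
  show ?thesis unfolding s_def[symmetric] A B gen by simp
qed

lemma neg_mv: "(- (A::real^'n^'m)) *v x = - (A *v x)"
  by (simp add: vec_eq_iff matrix_vector_mult_def sum_negf)

theorem mainTheorem3:
  fixes P :: "real^'nx^'nx" and R :: "real^'nz^'nz" and H :: "real^'nx^'nz"
    and xbar x0 :: "real^'nx" and z :: "real^'nz"
    and V :: "real^'nz^'nz" and \<alpha> :: "real^'nz"
    and x :: "real \<Rightarrow> real^'nx"
  assumes P: "spd P" and R: "spd R" and H: "rank H = CARD('nz)"
    and V: "orthogonal_matrix V"
    and eig: "inv_sqrt R ** H ** P ** transpose H ** inv_sqrt R
              = V ** diag_mat \<alpha> ** transpose V"
    and apos: "\<forall>i. 0 < \<alpha> $ i"
    and ode: "\<forall>l\<in>{0..1}. (x has_vector_derivative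
                 (EDH_A P R H l *v x l + EDH_b P R H xbar z l)) (at l within {0..1})"
    and init: "x 0 = x0"
  shows "let E = P ** transpose H ** inv_sqrt R ** V;
             Ft = transpose V ** inv_sqrt R ** H;
             zt = transpose V ** inv_sqrt R *v z;
             xt = Ft *v xbar;
             \<omega> = (\<chi> i. (1 / sqrt (1 + \<alpha> $ i) - 1) / \<alpha> $ i);
             c = (\<chi> i. (\<alpha> $ i * zt $ i + xt $ i * (1 - sqrt (1 + \<alpha> $ i)))
                        / (\<alpha> $ i * (1 + \<alpha> $ i)));
             \<beta> = (\<lambda>\<mu>. \<chi> i. (zt $ i * (1 + \<mu> * \<alpha> $ i / 2) - xt $ i / 2)
                        / (1 + \<mu> * \<alpha> $ i)\<^sup>2)
         in x 1 = (mat 1 + E ** diag_mat \<omega> ** Ft) *v x0 + E *v c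
            \<and> (\<forall>\<mu>\<in>{0..1}. EDH_b P R H xbar z \<mu> = E *v \<beta> \<mu>)"
proof -
  define S0 where "S0 = spd_sqrt R"
  define Sm where "Sm = inv_sqrt R"
  define Vt where "Vt = transpose V"
  define Ht where "Ht = transpose H"
  define E where "E = P ** Ht ** Sm ** V"
  define Ft where "Ft = Vt ** Sm ** H"
  define zt where "zt = Vt ** Sm *v z"
  define xt where "xt = Ft *v xbar"
  define \<omega> where "\<omega> = (\<chi> i. (1 / sqrt (1 + \<alpha> $ i) - 1) / \<alpha> $ i)"
  define c where "c = (\<chi> i. (\<alpha> $ i * zt $ i + xt $ i * (1 - sqrt (1 + \<alpha> $ i)))
                        / (\<alpha> $ i * (1 + \<alpha> $ i)))"
  define \<beta> where "\<beta> = (\<lambda>\<mu>. \<chi> i. (zt $ i * (1 + \<mu> * \<alpha> $ i / 2) - xt $ i / 2)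
                        / (1 + \<mu> * \<alpha> $ i)\<^sup>2)"
  define Dl where "Dl l = diag_mat (\<chi> i. 1 / (1 + l * \<alpha> $ i))" for l :: real
  define La where "La = diag_mat \<alpha>"
  note mva = matrix_vector_mul_assoc[symmetric]
  have f1: "S0 *v (Sm *v y) = y" for y unfolding S0_def Sm_def using inv_sqrt_props[OF R] by blast
  have f2: "Sm *v (S0 *v y) = y" for y unfolding S0_def Sm_def using inv_sqrt_props[OF R] by blast
  have f6: "R *v y = S0 *v (S0 *v y)" for y unfolding S0_def using inv_sqrt_props[OF R] by blast
  have f7: "matrix_inv R *v y = Sm *v (Sm *v y)" for y unfolding Sm_def using inv_sqrt_props[OF R] by blast
  have VV: "Vt ** V = mat 1" "V ** Vt = mat 1" using V unfolding orthogonal_matrix_def Vt_def by auto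
  have f3: "V *v (Vt *v y) = y" for y by (simp add: matrix_vector_mul_assoc VV)
  have f4: "Vt *v (V *v y) = y" for y by (simp add: matrix_vector_mul_assoc VV)
  have f5: "Sm *v (H *v (P *v (Ht *v (Sm *v y)))) = V *v (La *v (Vt *v y))" for y
  proof -
    have "(Sm ** H ** P ** Ht ** Sm) *v y = (V ** La ** Vt) *v y"
      using eig unfolding Sm_def Ht_def La_def Vt_def by simp
    then show ?thesis by (simp add: mva)
  qed
  have f8: "H *v (P *v (Ht *v (Sm *v y))) = S0 *v (V *v (La *v (Vt *v y)))" for y
    using arg_cong[OF f5[of y], of "\<lambda>v. S0 *v v"] by (simp add: f1)
  have Ev: "E *v y = P *v (Ht *v (Sm *v (V *v y)))" for y unfolding E_def by (simp add: mva)
  have Fv: "Ft *v y = Vt *v (Sm *v (H *v y))" for y unfolding Ft_def by (simp add: mva)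
  have FE: "Ft *v (E *v y) = La *v y" for y
    unfolding Ev Fv using f5 f4 by simp
  have opos: "1 + l * \<alpha> $ i > 0" if "l \<ge> 0" for l i
    using apos that by (metis add_pos_nonneg less_imp_le mult_nonneg_nonneg zero_less_one)
  have Minv: "matrix_inv (l *\<^sub>R (H ** P ** Ht) + R) = Sm ** V ** Dl l ** Vt ** Sm"
    if l: "l \<ge> 0" for l
  proof (rule inv_eq, rule matrix_eq_mv)
    fix v
    define u where "u = Vt *v (Sm *v v)"
    define y where "y = Dl l *v u"
    have "(l *\<^sub>R (H ** P ** Ht) + R) ** (Sm ** V ** Dl l ** Vt ** Sm) *v v
        = l *\<^sub>R (H *v (P *v (Ht *v (Sm *v (V *v y))))) + R *v (Sm *v (V *v y))"
      unfolding y_def u_def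
      by (simp add: mva matrix_vector_mult_add_rdistrib scaleR_mv)
    also have "\<dots> = S0 *v (V *v (l *\<^sub>R (La *v y) + y))"
      by (simp add: f8 f4 f6 f1 matrix_vector_right_distrib matrix_vector_mult_scaleR)
    also have "l *\<^sub>R (La *v y) + y = u"
    proof -
      have "u $ i / (1 + l * \<alpha> $ i) + l * (\<alpha> $ i * u $ i) / (1 + l * \<alpha> $ i) = u $ i" for i
      proof -
        have d: "1 + l * \<alpha> $ i \<noteq> 0" using opos[OF l, of i] by simp
        have "u $ i / (1 + l * \<alpha> $ i) + l * (\<alpha> $ i * u $ i) / (1 + l * \<alpha> $ i)
            = (u $ i * (1 + l * \<alpha> $ i)) / (1 + l * \<alpha> $ i)"
          by (simp add: add_divide_distrib[symmetric] algebra_simps)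
        also have "\<dots> = u $ i" using d by simp
        finally show ?thesis .
      qed
      then show ?thesis unfolding y_def La_def Dl_def by (simp add: diag_mv vec_eq_iff add.commute)
    qed
    also have "S0 *v (V *v u) = v" unfolding u_def by (simp add: f3 f1)
    finally show "(l *\<^sub>R (H ** P ** Ht) + R) ** (Sm ** V ** Dl l ** Vt ** Sm) *v v = mat 1 *v v"
      by simp
  qed
  have Av: "EDH_A P R H l *v y = (- (1/2)) *\<^sub>R (E *v (Dl l *v (Ft *v y)))" if l: "l \<ge> 0" for l y
    unfolding EDH_A_def Ht_def[symmetric] unfolding Minv[OF l] Ev Fv
    by (simp add: mva scaleR_mv neg_mv)
  have AE: "EDH_A P R H l *v (E *v y) = (- (1/2)) *\<^sub>R (E *v (Dl l *v (La *v y)))" if l: "l \<ge> 0" for l y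
    by (simp add: Av[OF l] FE)
  have PR: "P *v (Ht *v (matrix_inv R *v z)) = E *v zt"
    unfolding Ev zt_def by (simp add: mva f7 f3)
  have bform: "EDH_b P R H xbar z l = E *v \<beta> l" if l: "l \<ge> 0" for l
  proof -
    define A where "A = EDH_A P R H l"
    have s1: "((mat 1 + l *\<^sub>R A) ** P ** Ht ** matrix_inv R) *v z = E *v zt + l *\<^sub>R (A *v (E *v zt))"
      by (simp add: mva matrix_vector_mult_add_rdistrib scaleR_mv PR)
    have s2: "A *v xbar = (-(1/2)) *\<^sub>R (E *v (Dl l *v xt))" unfolding A_def xt_def by (rule Av[OF l])
    have s3: "A *v (E *v zt) = (-(1/2)) *\<^sub>R (E *v (Dl l *v (La *v zt)))" unfolding A_def by (rule AE[OF l])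
    define \<gamma> where "\<gamma> = zt + (l * (-(1/2))) *\<^sub>R (Dl l *v (La *v zt)) + (-(1/2)) *\<^sub>R (Dl l *v xt)"
    have s4: "((mat 1 + l *\<^sub>R A) ** P ** Ht ** matrix_inv R) *v z + A *v xbar = E *v \<gamma>"
      unfolding s1 s2 s3 \<gamma>_def by (simp add: matrix_vector_right_distrib matrix_vector_mult_scaleR matrix_vector_mult_diff_distrib)
    have s5: "(mat 1 + (2 * l) *\<^sub>R A) *v (E *v \<gamma>) = E *v (\<gamma> - l *\<^sub>R (Dl l *v (La *v \<gamma>)))"
      by (simp add: matrix_vector_mult_add_rdistrib scaleR_mv AE[OF l, folded A_def]
          matrix_vector_mult_diff_distrib matrix_vector_mult_scaleR)
    have s6: "\<gamma> - l *\<^sub>R (Dl l *v (La *v \<gamma>)) = \<beta> l"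
    proof (rule vec_eq_iff[THEN iffD2], rule allI)
      fix i
      have d: "1 + l * \<alpha> $ i \<noteq> 0" using opos[OF l, of i] by simp
      show "(\<gamma> - l *\<^sub>R (Dl l *v (La *v \<gamma>))) $ i = \<beta> l $ i"
      proof -
        have "\<gamma> $ i = zt$i + (l * (-(1/2))) * (1/(1 + l * \<alpha>$i) * (\<alpha>$i * zt$i))
             + (-(1/2)) * (1/(1 + l * \<alpha>$i) * xt$i)"
          unfolding \<gamma>_def Dl_def La_def by (simp add: diag_mv)
        also have "\<dots> = (zt$i * (1 + l * \<alpha>$i / 2) - xt$i / 2) / (1 + l * \<alpha>$i)"
          by (rule sc_g[OF d refl])
        finally have g: "\<gamma> $ i = (zt$i * (1 + l * \<alpha>$i / 2) - xt$i / 2) / (1 + l * \<alpha>$i)" .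
        have "(\<gamma> - l *\<^sub>R (Dl l *v (La *v \<gamma>))) $ i = \<gamma> $ i - l * (1/(1 + l * \<alpha>$i) * (\<alpha>$i * \<gamma> $ i))"
          unfolding Dl_def La_def by (simp add: diag_mv)
        also have "\<dots> = \<gamma> $ i / (1 + l * \<alpha>$i)" by (rule sc_h[OF d refl])
        finally have h: "(\<gamma> - l *\<^sub>R (Dl l *v (La *v \<gamma>))) $ i = \<gamma> $ i / (1 + l * \<alpha>$i)" .
        show ?thesis unfolding h g \<beta>_def by (simp add: power2_eq_square)
      qed
    qed
    have "EDH_b P R H xbar z l = (mat 1 + (2 * l) *\<^sub>R A) *v
       (((mat 1 + l *\<^sub>R A) ** P ** Ht ** matrix_inv R) *v z + A *v xbar)"
      unfolding EDH_b_def A_def Ht_def by (simp add: mva)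
    then show ?thesis using s4 s5 s6 by simp
  qed
  have ode_part: "x 1 = (mat 1 + E ** diag_mat \<omega> ** Ft) *v x0 + E *v c"
  proof -
    define q where "q l = (-(1/2)) *\<^sub>R (Dl l *v (Ft *v x l)) + \<beta> l" for l
    have dx: "(x has_vector_derivative E *v q l) (at l within {0..1})" if l: "l \<in> {0..1}" for l
    proof -
      have l0: "l \<ge> 0" using l by simp
      have "EDH_A P R H l *v x l + EDH_b P R H xbar z l = E *v q l"
        unfolding q_def by (simp add: Av[OF l0] bform[OF l0] matrix_vector_right_distrib matrix_vector_mult_scaleR matrix_vector_mult_diff_distrib)
      then show ?thesis using ode l by (metis has_vector_derivative_eq_rhs)
    qed
    define Li where "Li = diag_mat (\<chi> i. 1 / \<alpha>$i)"
    have LiLa: "Li *v (La *v y) = y" for y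
    proof -
      have "1 / \<alpha>$i * (\<alpha>$i * y$i) = y$i" for i using apos[rule_format, of i] by simp
      then show ?thesis unfolding Li_def La_def by (simp add: diag_mv vec_eq_iff)
    qed
    define M where "M = E ** Li ** Ft"
    have Mq: "M *v (E *v y) = E *v y" for y
      unfolding M_def by (simp add: mva FE LiLa)
    have dv: "((\<lambda>l. x l - M *v x l) has_vector_derivative 0) (at l within {0..1})" if l: "l \<in> {0..1}" for l
    proof -
      have "((\<lambda>l. x l - M *v x l) has_vector_derivative (E *v q l - M *v (E *v q l))) (at l within {0..1})"
        by (intro has_vector_derivative_diff dx[OF l]
            bounded_linear.has_vector_derivative[OF matrix_vector_mul_bounded_linear])
      then show ?thesis by (simp add: Mq)
    qed
    obtain C where C: "\<And>l. l \<in> {0..1} \<Longrightarrow> x l - M *v x l = C"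
      using has_vector_derivative_zero_constant[of "{0..1::real}" "\<lambda>l. x l - M *v x l"] dv by auto
    have x1eq: "x 1 - M *v x 1 = x0 - M *v x0" using C[of 1] C[of 0] init by simp
    have scal: "(Li *v (Ft *v x 1 - Ft *v x0)) $ i = (diag_mat \<omega> *v (Ft *v x0) + c) $ i" for i
    proof -
      define a where "a = \<alpha> $ i"
      have a: "a > 0" unfolding a_def using apos by simp
      define W where "W l = (Ft *v x l) $ i" for l
      have dW: "(W has_real_derivative a * (-(1/2) * (1/(1 + l*a) * W l)
          + (zt$i * (1 + l*a/2) - xt$i/2) / (1 + l*a)^2)) (at l within {0..1})" if l: "l \<in> {0..1}" for l
      proof -
        have "((\<lambda>l. Ft *v x l) has_vector_derivative Ft *v (E *v q l)) (at l within {0..1})"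
          by (rule bounded_linear.has_vector_derivative[OF matrix_vector_mul_bounded_linear dx[OF l]])
        then have "((\<lambda>l. (Ft *v x l) $ i) has_vector_derivative (Ft *v (E *v q l)) $ i) (at l within {0..1})"
          by (rule bounded_linear.has_vector_derivative[OF bounded_linear_vec_nth])
        moreover have "(Ft *v (E *v q l)) $ i = a * (-(1/2) * (1/(1 + l*a) * W l)
          + (zt$i * (1 + l*a/2) - xt$i/2) / (1 + l*a)^2)"
          unfolding FE q_def La_def Dl_def \<beta>_def W_def a_def by (simp add: diag_mv)
        ultimately show ?thesis unfolding W_def has_real_derivative_iff_has_vector_derivative by simp
      qed
      define h where "h l = sqrt (1 + l*a) * W l - zt$i * sqrt (1 + l*a) + (zt$i - xt$i) / sqrt (1 + l*a)" for l
      have dh: "(h has_real_derivative 0) (at l within {0..1})" if l: "l \<in> {0..1}" for l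
      proof -
        have "0 < 1 + l * a" using l a by (simp add: add_pos_nonneg)
        then show ?thesis unfolding h_def by (rule scalar_deriv[OF _ dW[OF l]])
      qed
      obtain K where K: "\<And>l. l \<in> {0..1} \<Longrightarrow> h l = K"
        using has_field_derivative_zero_constant[of "{0..1::real}" h] dh by auto
      have "h 1 = h 0" using K[of 1] K[of 0] by simp
      then have "1 / a * (W 1 - W 0) = (1 / sqrt (1 + a) - 1) / a * W 0
          + (a * zt$i + xt$i * (1 - sqrt (1 + a))) / (a * (1 + a))"
        unfolding h_def by (intro scalar_final[OF a]) simp
      moreover have "W 0 = (Ft *v x0) $ i" unfolding W_def init ..
      ultimately show ?thesis unfolding Li_def \<omega>_def c_def W_def a_def
        by (simp add: diag_mv)
    qed
    have "x 1 = x0 + M *v x 1 - M *v x0" using x1eq by (simp add: algebra_simps)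
    also have "\<dots> = x0 + E *v (Li *v (Ft *v x 1 - Ft *v x0))"
      unfolding M_def by (simp add: mva matrix_vector_mult_diff_distrib)
    also have "Li *v (Ft *v x 1 - Ft *v x0) = diag_mat \<omega> *v (Ft *v x0) + c"
      using scal by (simp add: vec_eq_iff)
    also have "x0 + E *v (diag_mat \<omega> *v (Ft *v x0) + c) = (mat 1 + E ** diag_mat \<omega> ** Ft) *v x0 + E *v c"
      by (simp add: mva matrix_vector_mult_add_rdistrib matrix_vector_right_distrib)
    finally show ?thesis .
  qed
  have goal: "x 1 = (mat 1 + E ** diag_mat \<omega> ** Ft) *v x0 + E *v c
            \<and> (\<forall>\<mu>\<in>{0..1}. EDH_b P R H xbar z \<mu> = E *v \<beta> \<mu>)"
    using ode_part bform by auto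
  then show ?thesis unfolding Let_def E_def Ft_def zt_def xt_def \<omega>_def c_def \<beta>_def Sm_def Ht_def Vt_def .
qed

end
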